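(* Let $\alpha:A^{\Delta}\to(H,V)\circ{\cal U}_1$ be a homomorphism, where $(H,V)$ is a finite forest algebra with $H$ idempotent and commutative, and let $\pi$ be the projection homomorphism from $(H,V)\circ{\cal U}_1$ onto $(H,V)$. If $\beta=\pi\alpha$ is nonconfusing, then $\alpha$ is nonconfusing.
   Context: $A^{\Delta}$: free forest algebra of forests and contexts over $A$. Forest algebra: additive monoid $H$, monoid $V$ acting faithfully on the left, containing $g\mapsto g+h$, $g\mapsto h+g$. Wreath product $(H_1,V_1)\circ(H_2,V_2)=(H_1\times H_2,V_1\times V_2^{H_1})$ with componentwise addition and $(v,f)(h_1,h_2)=(vh_1,f(h_1)h_2)$; $\pi(h_1,h_2)=h_1$, $\pi(v,f)=v$. ${\cal U}_1=(\{0,\infty\},\{1,0\})$ with $0+x=x$, $\infty+x=\infty$, $1$ the identity and $0$ the constant map to $\infty$. Reachability: $h\le h'$ iff $h=vh'$ for some $v$; classes of mutual reachability; $h>\Gamma$ means strictly above. For $\gamma$ and class $\Gamma$, $\gamma_\Gamma$ is the quotient identifying $\{h:h\not>\Gamma\}$ to one absorbing $\infty$; $s^{\gamma_\Gamma}$ relabels each node with subtree $at$ by $(a,\gamma_\Gamma(t))$. $\sim_k$ on forests over an alphabet $B$: $\sim_0$ total, $s\sim_{k+1}s'$ iff the sets $\{(b_i,[s_i]_{\sim_k})\}$ for $s=\sum b_is_i$, $s'=\sum b'_js'_j$ coincide. $s_1\equiv_{\gamma,k,\Gamma}s_2$ iff $(s_1)^{\gamma_\Gamma}\sim_k(s_2)^{\gamma_\Gamma}$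 and $\gamma(s_1),\gamma(s_2)\in\Gamma$. $\gamma$ is nonconfusing if there is $k>0$ such that for every reachability class $\Gamma$ of its target, $s_1\equiv_{\gamma,k,\Gamma}s_2$ implies $\gamma(s_1)=\gamma(s_2)$. *)

theory Defs
  imports Main "HOL-Library.FuncSet"
begin

datatype 'a tree = Node 'a "'a tree list"

type_synonym 'a forest = "'a tree list"

text \<open>A context is a forest with exactly one hole at a leaf:
  CHole l r is l + hole + r, and CNode l a c r is l + a(c) + r.\<close>
datatype 'a ctx = CHole "'a forest" "'a forest" | CNode "'a forest" 'a "'a ctx" "'a forest"

fun ctx_fill :: "'a ctx \<Rightarrow> 'a forest \<Rightarrow> 'a forest" where
  "ctx_fill (CHole l r) s = l @ s @ r"
| "ctx_fill (CNode l a c r) s = l @ [Node a (ctx_fill c s)] @ r"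

fun ctx_pad :: "'a forest \<Rightarrow> 'a forest \<Rightarrow> 'a ctx \<Rightarrow> 'a ctx" where
  "ctx_pad l r (CHole l' r') = CHole (l @ l') (r' @ r)"
| "ctx_pad l r (CNode l' a c r') = CNode (l @ l') a c (r' @ r)"

fun ctx_comp :: "'a ctx \<Rightarrow> 'a ctx \<Rightarrow> 'a ctx" where
  "ctx_comp (CHole l r) d = ctx_pad l r d"
| "ctx_comp (CNode l a c r) d = CNode l a (ctx_comp c d) r"

definition ctx_id :: "'a ctx" where "ctx_id = CHole [] []"

record ('h, 'v) falg =
  hcar :: "'h set"
  vcar :: "'v set"
  hadd :: "'h \<Rightarrow> 'h \<Rightarrow> 'h"
  hzero :: 'h
  vmul :: "'v \<Rightarrow> 'v \<Rightarrow> 'v"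
  vone :: 'v
  act :: "'v \<Rightarrow> 'h \<Rightarrow> 'h"

definition forest_algebra :: "('h, 'v) falg \<Rightarrow> bool" where
  "forest_algebra F \<longleftrightarrow>
     hzero F \<in> hcar F \<and>
     (\<forall>g\<in>hcar F. \<forall>h\<in>hcar F. hadd F g h \<in> hcar F) \<and>
     (\<forall>g\<in>hcar F. \<forall>h\<in>hcar F. \<forall>k\<in>hcar F. hadd F (hadd F g h) k = hadd F g (hadd F h k)) \<and>
     (\<forall>h\<in>hcar F. hadd F (hzero F) h = h \<and> hadd F h (hzero F) = h) \<and>
     vone F \<in> vcar F \<and>
     (\<forall>v\<in>vcar F. \<forall>w\<in>vcar F. vmul F v w \<in> vcar F) \<and>
     (\<forall>u\<in>vcar F. \<forall>v\<in>vcar F. \<forall>w\<in>vcar F. vmul F (vmul F u v) w = vmul F u (vmul F v w)) \<and>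
     (\<forall>v\<in>vcar F. vmul F (vone F) v = v \<and> vmul F v (vone F) = v) \<and>
     (\<forall>v\<in>vcar F. \<forall>h\<in>hcar F. act F v h \<in> hcar F) \<and>
     (\<forall>v\<in>vcar F. \<forall>w\<in>vcar F. \<forall>h\<in>hcar F. act F (vmul F v w) h = act F v (act F w h)) \<and>
     (\<forall>h\<in>hcar F. act F (vone F) h = h) \<and>
     (\<forall>v\<in>vcar F. \<forall>w\<in>vcar F. (\<forall>h\<in>hcar F. act F v h = act F w h) \<longrightarrow> v = w) \<and>
     (\<forall>h\<in>hcar F. \<exists>v\<in>vcar F. \<forall>g\<in>hcar F. act F v g = hadd F g h) \<and>
     (\<forall>h\<in>hcar F. \<exists>v\<in>vcar F. \<forall>g\<in>hcar F. act F v g = hadd F h g)"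

definition finite_falg :: "('h, 'v) falg \<Rightarrow> bool" where
  "finite_falg F \<longleftrightarrow> finite (hcar F) \<and> finite (vcar F)"

text \<open>A homomorphism from the free forest algebra A^Delta into F, given by its
  forest part aH and its context part aV.\<close>
definition free_hom :: "('h, 'v) falg \<Rightarrow> ('a forest \<Rightarrow> 'h) \<Rightarrow> ('a ctx \<Rightarrow> 'v) \<Rightarrow> bool" where
  "free_hom F aH aV \<longleftrightarrow>
     (\<forall>s. aH s \<in> hcar F) \<and> (\<forall>c. aV c \<in> vcar F) \<and>
     aH [] = hzero F \<and> (\<forall>s t. aH (s @ t) = hadd F (aH s) (aH t)) \<and>
     aV ctx_id = vone F \<and> (\<forall>c d. aV (ctx_comp c d) = vmul F (aV c) (aV d)) \<and>
     (\<forall>c s. aH (ctx_fill c s) = act F (aV c) (aH s))"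

text \<open>Wreath product (H1,V1) o (H2,V2) = (H1 x H2, V1 x V2^H1); functions H1 -> V2
  are represented extensionally (undefined outside H1).\<close>
definition wreath :: "('h1, 'v1) falg \<Rightarrow> ('h2, 'v2) falg \<Rightarrow> ('h1 \<times> 'h2, 'v1 \<times> ('h1 \<Rightarrow> 'v2)) falg" where
  "wreath F G = \<lparr> hcar = hcar F \<times> hcar G,
     vcar = vcar F \<times> (hcar F \<rightarrow>\<^sub>E vcar G),
     hadd = (\<lambda>(a, b) (c, d). (hadd F a c, hadd G b d)),
     hzero = (hzero F, hzero G),
     vmul = (\<lambda>(v, f) (w, g). (vmul F v w, \<lambda>h\<in>hcar F. vmul G (f (act F w h)) (g h))),
     vone = (vone F, \<lambda>h\<in>hcar F. vone G),
     act = (\<lambda>(v, f) (h1, h2). (act F v h1, act G (f h1) h2)) \<rparr>"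

datatype u1h = UZero | UInf
datatype u1v = UOne | UConst

fun u1_add :: "u1h \<Rightarrow> u1h \<Rightarrow> u1h" where
  "u1_add UZero x = x"
| "u1_add UInf x = UInf"

fun u1_act :: "u1v \<Rightarrow> u1h \<Rightarrow> u1h" where
  "u1_act UOne x = x"
| "u1_act UConst x = UInf"

fun u1_mul :: "u1v \<Rightarrow> u1v \<Rightarrow> u1v" where
  "u1_mul UOne w = w"
| "u1_mul UConst w = UConst"

definition U1 :: "(u1h, u1v) falg" where
  "U1 = \<lparr> hcar = UNIV, vcar = UNIV, hadd = u1_add, hzero = UZero,
          vmul = u1_mul, vone = UOne, act = u1_act \<rparr>"

definition reach :: "('h, 'v) falg \<Rightarrow> 'h \<Rightarrow> 'h \<Rightarrow> bool" where
  "reach F h h' \<longleftrightarrow> (\<exists>v\<in>vcar F. h = act F v h')"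

definition reach_class :: "('h, 'v) falg \<Rightarrow> 'h set \<Rightarrow> bool" where
  "reach_class F \<Gamma> \<longleftrightarrow> (\<exists>h\<in>hcar F. \<Gamma> = {h'\<in>hcar F. reach F h h' \<and> reach F h' h})"

definition above :: "('h, 'v) falg \<Rightarrow> 'h \<Rightarrow> 'h set \<Rightarrow> bool" where
  "above F h \<Gamma> \<longleftrightarrow> (\<exists>g\<in>\<Gamma>. reach F g h \<and> \<not> reach F h g)"

text \<open>gamma_Gamma: None plays the role of the absorbing element infinity.\<close>
definition quot_hom :: "('h, 'v) falg \<Rightarrow> ('a forest \<Rightarrow> 'h) \<Rightarrow> 'h set \<Rightarrow> 'a forest \<Rightarrow> 'h option" where
  "quot_hom F \<gamma> \<Gamma> t = (if above F (\<gamma> t) \<Gamma> then Some (\<gamma> t) else None)"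

fun relabel_tree :: "('a forest \<Rightarrow> 'c) \<Rightarrow> 'a tree \<Rightarrow> ('a \<times> 'c) tree" where
  "relabel_tree f (Node a t) = Node (a, f t) (map (relabel_tree f) t)"

definition relabel :: "('a forest \<Rightarrow> 'c) \<Rightarrow> 'a forest \<Rightarrow> ('a \<times> 'c) forest" where
  "relabel f s = map (relabel_tree f) s"

primrec sim :: "nat \<Rightarrow> 'b forest \<Rightarrow> 'b forest \<Rightarrow> bool" where
  "sim 0 s s' = True"
| "sim (Suc k) s s' =
     ({(b, {u. sim k t u}) | b t. Node b t \<in> set s} =
      {(b, {u. sim k t u}) | b t. Node b t \<in> set s'})"

definition equiv_k :: "('h, 'v) falg \<Rightarrow> ('a forest \<Rightarrow> 'h) \<Rightarrow> nat \<Rightarrow> 'h set \<Rightarrow> 'a forest \<Rightarrow> 'a forest \<Rightarrow> bool" where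
  "equiv_k F \<gamma> k \<Gamma> s1 s2 \<longleftrightarrow>
     sim k (relabel (quot_hom F \<gamma> \<Gamma>) s1) (relabel (quot_hom F \<gamma> \<Gamma>) s2) \<and>
     \<gamma> s1 \<in> \<Gamma> \<and> \<gamma> s2 \<in> \<Gamma>"

definition nonconfusing :: "('h, 'v) falg \<Rightarrow> ('a forest \<Rightarrow> 'h) \<Rightarrow> bool" where
  "nonconfusing F \<gamma> \<longleftrightarrow>
     (\<exists>k>0. \<forall>\<Gamma>. reach_class F \<Gamma> \<longrightarrow>
        (\<forall>s1 s2. equiv_k F \<gamma> k \<Gamma> s1 s2 \<longrightarrow> \<gamma> s1 = \<gamma> s2))"

end

theory Submission
  imports Defs
begin

lemma sim_refl: "sim k s s"
  by (induction k arbitrary: s) auto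

lemma sim_sym: "sim k s t \<Longrightarrow> sim k t s"
  by (induction k arbitrary: s t) auto

lemma sim_trans: "sim k s t \<Longrightarrow> sim k t u \<Longrightarrow> sim k s u"
  by (induction k arbitrary: s t u) auto
lemma sim_cls: "({u. sim k t u} = {u. sim k t' u}) \<longleftrightarrow> sim k t t'"
proof
  assume "{u. sim k t u} = {u. sim k t' u}"
  then show "sim k t t'" using sim_refl[of k t'] by auto
next
  assume "sim k t t'"
  then show "{u. sim k t u} = {u. sim k t' u}" using sim_sym sim_trans by blast
qed

lemma sim_map: "sim k s s' \<Longrightarrow> sim k (map (map_tree \<psi>) s) (map (map_tree \<psi>) s')"
proof (induction k arbitrary: s s')
  case 0
  then show ?case by simp
next
  case (Suc k)
  have dir: "{(b, {u. sim k t u}) | b t. Node b t \<in> set (map (map_tree \<psi>) s1)}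
      \<subseteq> {(b, {u. sim k t u}) | b t. Node b t \<in> set (map (map_tree \<psi>) s2)}"
    if h: "sim (Suc k) s1 s2" for s1 s2
  proof
    fix p assume "p \<in> {(b, {u. sim k t u}) | b t. Node b t \<in> set (map (map_tree \<psi>) s1)}"
    then obtain b t where p: "p = (b, {u. sim k t u})" and bt: "Node b t \<in> set (map (map_tree \<psi>) s1)"
      by blast
    then obtain T where T: "T \<in> set s1" "map_tree \<psi> T = Node b t" by auto
    obtain a0 t0 where T0: "T = Node a0 t0" by (cases T)
    with T have bt0: "b = \<psi> a0" "t = map (map_tree \<psi>) t0" by auto
    have "(a0, {u. sim k t0 u}) \<in> {(b, {u. sim k t u}) | b t. Node b t \<in> set s1}"
      using T T0 by blast
    with h have "(a0, {u. sim k t0 u}) \<in> {(b, {u. sim k t u}) | b t. Node b t \<in> set s2}" by simp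
    then obtain t1 where t1: "Node a0 t1 \<in> set s2" "{u. sim k t0 u} = {u. sim k t1 u}" by blast
    then have "sim k t0 t1" using sim_cls by blast
    then have "sim k t (map (map_tree \<psi>) t1)" using Suc.IH bt0 by blast
    then have "{u. sim k t u} = {u. sim k (map (map_tree \<psi>) t1) u}" using sim_cls by blast
    moreover have "Node b (map (map_tree \<psi>) t1) \<in> set (map (map_tree \<psi>) s2)"
      using t1(1) bt0 by force
    ultimately show "p \<in> {(b, {u. sim k t u}) | b t. Node b t \<in> set (map (map_tree \<psi>) s2)}"
      using p by blast
  qed
  have "sim (Suc k) s' s" using Suc.prems sim_sym sim_trans by blast
  then show ?case using dir[OF Suc.prems] dir[of s' s] by (simp only: sim.simps) blast
qed

inductive occ :: "'a forest \<Rightarrow> 'a forest \<Rightarrow> bool" where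
  occ1: "Node a t \<in> set s \<Longrightarrow> occ t s"
| occ2: "Node a t \<in> set s \<Longrightarrow> occ u t \<Longrightarrow> occ u s"

lemma relabel_tree_map:
  "(\<forall>u. occ u [T] \<longrightarrow> g u = \<psi> (f u)) \<Longrightarrow>
   relabel_tree g T = map_tree (apsnd \<psi>) (relabel_tree f T)"
proof (induction T)
  case (Node a ts)
  have "g ts = \<psi> (f ts)" using Node.prems occ1[of a ts "[Node a ts]"] by simp
  moreover have "relabel_tree g t = map_tree (apsnd \<psi>) (relabel_tree f t)" if t: "t \<in> set ts" for t
  proof (rule Node.IH[OF t])
    show "\<forall>u. occ u [t] \<longrightarrow> g u = \<psi> (f u)"
    proof (intro allI impI)
      fix u assume "occ u [t]"
      then have "occ u ts" by (induction u "[t]" rule: occ.induct) (use t in \<open>auto intro: occ.intros\<close>)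
      then have "occ u [Node a ts]" by (rule occ2[rotated]) simp
      then show "g u = \<psi> (f u)" using Node.prems by blast
    qed
  qed
  ultimately show ?case by simp
qed

lemma relabel_map:
  "(\<forall>u. occ u s \<longrightarrow> g u = \<psi> (f u)) \<Longrightarrow>
   relabel g s = map (map_tree (apsnd \<psi>)) (relabel f s)"
proof -
  assume h: "\<forall>u. occ u s \<longrightarrow> g u = \<psi> (f u)"
  have "relabel_tree g T = map_tree (apsnd \<psi>) (relabel_tree f T)" if T: "T \<in> set s" for T
  proof (rule relabel_tree_map, intro allI impI)
    fix u assume "occ u [T]"
    then have "occ u s" by (induction u "[T]" rule: occ.induct) (use T in \<open>auto intro: occ.intros\<close>)
    then show "g u = \<psi> (f u)" using h by blast
  qed
  then show ?thesis unfolding relabel_def by simp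
qed



lemma wreath_simps:
  "hcar (wreath F G) = hcar F \<times> hcar G"
  "vcar (wreath F G) = vcar F \<times> (hcar F \<rightarrow>\<^sub>E vcar G)"
  "hadd (wreath F G) (a, b) (c, d) = (hadd F a c, hadd G b d)"
  "act (wreath F G) (v, f) (h1, h2) = (act F v h1, act G (f h1) h2)"
  by (simp_all add: wreath_def)

lemma U1_simps: "hcar U1 = UNIV" "vcar U1 = UNIV" "hadd U1 = u1_add" "act U1 = u1_act"
  by (simp_all add: U1_def)

lemma reachW:
  assumes "h1' \<in> hcar F"
  shows "reach (wreath F U1) (h1, h2) (h1', h2') \<longleftrightarrow> reach F h1 h1' \<and> (h2 = h2' \<or> h2 = UInf)"
proof
  assume "reach (wreath F U1) (h1, h2) (h1', h2')"
  then obtain v f where vf: "v \<in> vcar F" "(h1, h2) = act (wreath F U1) (v, f) (h1', h2')"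
    unfolding reach_def by (auto simp: wreath_simps)
  then have "h1 = act F v h1'" "h2 = u1_act (f h1') h2'" by (simp_all add: wreath_simps U1_simps)
  then show "reach F h1 h1' \<and> (h2 = h2' \<or> h2 = UInf)" using vf(1) unfolding reach_def
    by (cases "f h1'") auto
next
  assume "reach F h1 h1' \<and> (h2 = h2' \<or> h2 = UInf)"
  then obtain v where v: "v \<in> vcar F" "h1 = act F v h1'" and h2: "h2 = h2' \<or> h2 = UInf"
    unfolding reach_def by auto
  define f where "f = (\<lambda>h\<in>hcar F. if h2 = h2' then UOne else UConst)"
  have "f \<in> hcar F \<rightarrow>\<^sub>E vcar U1" unfolding f_def U1_simps by auto
  moreover have "(h1, h2) = act (wreath F U1) (v, f) (h1', h2')"
    using v h2 assms by (auto simp: wreath_simps U1_simps f_def)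
  ultimately show "reach (wreath F U1) (h1, h2) (h1', h2')"
    unfolding reach_def using v(1) by (intro bexI[of _ "(v,f)"]) (auto simp: wreath_simps)
qed

lemma classW:
  assumes "reach_class (wreath F U1) \<Delta>"
  obtains \<Gamma> x where "reach_class F \<Gamma>" "\<Delta> = \<Gamma> \<times> {x}" "\<Gamma> \<subseteq> hcar F"
proof -
  obtain h1 h2 where h: "h1 \<in> hcar F" and D: "\<Delta> = {h'\<in>hcar (wreath F U1). reach (wreath F U1) (h1,h2) h' \<and> reach (wreath F U1) h' (h1,h2)}"
    using assms unfolding reach_class_def wreath_simps by auto
  define \<Gamma> where "\<Gamma> = {h'\<in>hcar F. reach F h1 h' \<and> reach F h' h1}"
  have "reach_class F \<Gamma>" unfolding reach_class_def \<Gamma>_def using h by blast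
  moreover have "\<Delta> = \<Gamma> \<times> {h2}"
  proof (rule set_eqI)
    fix p show "p \<in> \<Delta> \<longleftrightarrow> p \<in> \<Gamma> \<times> {h2}"
      using h by (cases p) (auto simp: D \<Gamma>_def wreath_simps U1_simps reachW)
  qed
  ultimately show ?thesis using that \<Gamma>_def by blast
qed



lemma u1_add_zero: "u1_add x y = UZero \<Longrightarrow> x = UZero \<and> y = UZero"
  by (cases x) auto

lemma node_zero:
  assumes hom: "free_hom (wreath F U1) \<alpha>H \<alpha>V"
    and n: "Node a t \<in> set s" and z: "snd (\<alpha>H s) = UZero"
  shows "snd (\<alpha>H t) = UZero"
proof -
  obtain l r where s: "s = l @ [Node a t] @ r" using n by (metis append.left_neutral append_Cons split_list)
  have add: "\<alpha>H (x @ y) = hadd (wreath F U1) (\<alpha>H x) (\<alpha>H y)" for x y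
    using hom unfolding free_hom_def by blast
  have sndadd: "snd (\<alpha>H (x @ y)) = u1_add (snd (\<alpha>H x)) (snd (\<alpha>H y))" for x y
    unfolding add by (cases "\<alpha>H x"; cases "\<alpha>H y") (simp add: wreath_simps U1_simps)
  have "snd (\<alpha>H [Node a t]) = UZero"
    using z unfolding s sndadd by (auto dest: u1_add_zero)
  moreover have "[Node a t] = ctx_fill (CNode [] a (CHole [] []) []) t" by simp
  then have "\<alpha>H [Node a t] = act (wreath F U1) (\<alpha>V (CNode [] a (CHole [] []) [])) (\<alpha>H t)"
    using hom unfolding free_hom_def by metis
  ultimately show ?thesis
    by (cases "\<alpha>V (CNode [] a (CHole [] []) [])"; cases "\<alpha>H t")
       (auto simp: wreath_simps U1_simps elim: u1_act.elims)
qed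

lemma occ_zero:
  assumes hom: "free_hom (wreath F U1) \<alpha>H \<alpha>V"
  shows "occ u s \<Longrightarrow> snd (\<alpha>H s) = UZero \<Longrightarrow> snd (\<alpha>H u) = UZero"
  by (induction rule: occ.induct) (use node_zero[OF hom] in blast)+



theorem lemma7:
  fixes F :: "('h, 'v) falg"
    and \<alpha>H :: "('a::finite) forest \<Rightarrow> 'h \<times> u1h"
    and \<alpha>V :: "'a ctx \<Rightarrow> 'v \<times> ('h \<Rightarrow> u1v)"
  assumes "forest_algebra F" and "finite_falg F"
    and "\<forall>h\<in>hcar F. hadd F h h = h"
    and "\<forall>g\<in>hcar F. \<forall>h\<in>hcar F. hadd F g h = hadd F h g"
    and "free_hom (wreath F U1) \<alpha>H \<alpha>V"
    and "nonconfusing F (fst \<circ> \<alpha>H)"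
  shows "nonconfusing (wreath F U1) \<alpha>H"
proof -
  note hom = assms(5)
  let ?W = "wreath F U1"
  let ?\<beta> = "fst \<circ> \<alpha>H"
  have inW: "\<alpha>H t \<in> hcar ?W" for t using hom unfolding free_hom_def by blast
  have inF: "fst (\<alpha>H t) \<in> hcar F" for t using inW[of t] by (auto simp: wreath_simps mem_Times_iff)
  obtain k where k: "k > 0" and nc: "\<And>\<Gamma> s1 s2. reach_class F \<Gamma> \<Longrightarrow> equiv_k F ?\<beta> k \<Gamma> s1 s2 \<Longrightarrow> ?\<beta> s1 = ?\<beta> s2"
    using assms(6) unfolding nonconfusing_def by blast
  show ?thesis unfolding nonconfusing_def
  proof (intro exI[of _ k] conjI k allI impI)
    fix \<Delta> s1 s2
    assume cl: "reach_class ?W \<Delta>" and eq: "equiv_k ?W \<alpha>H k \<Delta> s1 s2"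
    obtain \<Gamma> x where G: "reach_class F \<Gamma>" "\<Delta> = \<Gamma> \<times> {x}" "\<Gamma> \<subseteq> hcar F"
      using classW[OF cl] by metis
    have s1: "fst (\<alpha>H s1) \<in> \<Gamma>" "snd (\<alpha>H s1) = x" and s2: "fst (\<alpha>H s2) \<in> \<Gamma>" "snd (\<alpha>H s2) = x"
      using eq G(2) unfolding equiv_k_def by (auto simp: mem_Times_iff)
    define \<psi> where "\<psi> = (\<lambda>p :: ('h \<times> u1h) option. case p of None \<Rightarrow> None
         | Some q \<Rightarrow> if above F (fst q) \<Gamma> then Some (fst q) else None)"
    have key: "quot_hom F ?\<beta> \<Gamma> t = \<psi> (quot_hom ?W \<alpha>H \<Delta> t)"
      if tx: "x = UInf \<or> snd (\<alpha>H t) = x" for t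
    proof (cases "above F (fst (\<alpha>H t)) \<Gamma>")
      case True
      then obtain g where g: "g \<in> \<Gamma>" "reach F g (fst (\<alpha>H t))" "\<not> reach F (fst (\<alpha>H t)) g"
        unfolding above_def by blast
      have gF: "g \<in> hcar F" using g G(3) by blast
      have "reach ?W (g, x) (fst (\<alpha>H t), snd (\<alpha>H t)) \<longleftrightarrow> reach F g (fst (\<alpha>H t)) \<and> (x = snd (\<alpha>H t) \<or> x = UInf)"
        by (rule reachW[OF inF])
      then have "reach ?W (g, x) (fst (\<alpha>H t), snd (\<alpha>H t))"
        using g tx by blast
      moreover have "\<not> reach ?W (fst (\<alpha>H t), snd (\<alpha>H t)) (g, x)"
        using reachW[OF gF, of "fst (\<alpha>H t)" "snd (\<alpha>H t)" x] g by blast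
      ultimately have "above ?W (\<alpha>H t) \<Delta>" unfolding above_def G(2) using g(1) by force
      then show ?thesis using True by (simp add: quot_hom_def \<psi>_def)
    next
      case False
      then show ?thesis by (simp add: quot_hom_def \<psi>_def)
    qed
    have rel: "relabel (quot_hom F ?\<beta> \<Gamma>) s = map (map_tree (apsnd \<psi>)) (relabel (quot_hom ?W \<alpha>H \<Delta>) s)"
      if "snd (\<alpha>H s) = x" for s
    proof (rule relabel_map, intro allI impI)
      fix u assume "occ u s"
      then have "x = UInf \<or> snd (\<alpha>H u) = x"
        using occ_zero[OF hom] that by (cases x) auto
      then show "quot_hom F ?\<beta> \<Gamma> u = \<psi> (quot_hom ?W \<alpha>H \<Delta> u)" by (rule key)
    qed
    have "sim k (relabel (quot_hom ?W \<alpha>H \<Delta>) s1) (relabel (quot_hom ?W \<alpha>H \<Delta>) s2)"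
      using eq unfolding equiv_k_def by blast
    then have "sim k (relabel (quot_hom F ?\<beta> \<Gamma>) s1) (relabel (quot_hom F ?\<beta> \<Gamma>) s2)"
      unfolding rel[OF s1(2)] rel[OF s2(2)] by (rule sim_map)
    then have "equiv_k F ?\<beta> k \<Gamma> s1 s2" unfolding equiv_k_def using s1 s2 by simp
    then have "?\<beta> s1 = ?\<beta> s2" by (rule nc[OF G(1)])
    then show "\<alpha>H s1 = \<alpha>H s2" using s1 s2 by (simp add: prod_eq_iff)
  qed
qed

end
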